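(* The norm $A\mapsto \frac{1}{n}\omega_*(A)$ is the maximum element of the class of $L$-norms $\||\cdot\||$ on $\mathbb{M}_n$ satisfying $\||A\||\le\|A\|_\infty$ for all $A\in\mathbb{M}_n$.
   Context: $\mathbb{M}_n$ is the algebra of complex $n\times n$ matrices with identity $I$; $\|\cdot\|_\infty$ is the operator norm, $\omega(A)=\sup\{|\langle x,Ax\rangle|:\|x\|=1\}$ the numerical radius, and $\omega_*(Y)=\sup\{|\mathrm{Tr}(Y^*X)|:\omega(X)\le1\}$ its dual norm. A norm $\||\cdot\||$ on $\mathbb{M}_n$ is an $L$-norm if $\sum_{i=1}^k\||C_iXC_i^*\||\le\||X\||$ for all $k$, all $X$ and all $C_i$ with $\sum_{i=1}^k C_i^*C_i=I$. *)

theory Defs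
  imports "HOL-Analysis.Analysis"
begin

text \<open>Complex n x n matrices are modelled as complex^'n^'n with 'n a finite type, n = CARD('n).
  The vector norm on complex^'n is the library Euclidean norm.\<close>

type_synonym 'n cmat = "complex^'n^'n"

definition cinner :: "complex^'n::finite \<Rightarrow> complex^'n \<Rightarrow> complex" where
  "cinner x y = (\<Sum>i\<in>UNIV. cnj (x $ i) * y $ i)"

definition madj :: "'n::finite cmat \<Rightarrow> 'n cmat" where
  "madj A = (\<chi> i j. cnj (A $ j $ i))"

definition mtrace :: "'n::finite cmat \<Rightarrow> complex" where
  "mtrace A = (\<Sum>i\<in>UNIV. A $ i $ i)"

definition msmult :: "complex \<Rightarrow> 'n::finite cmat \<Rightarrow> 'n cmat" where
  "msmult c A = (\<chi> i j. c * A $ i $ j)"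

definition op_norm :: "'n::finite cmat \<Rightarrow> real" where
  "op_norm A = Sup {norm (A *v x) | x. norm x = 1}"

definition num_radius :: "'n::finite cmat \<Rightarrow> real" where
  "num_radius A = Sup {cmod (cinner x (A *v x)) | x. norm x = 1}"

definition dual_num_radius :: "'n::finite cmat \<Rightarrow> real" where
  "dual_num_radius Y = Sup {cmod (mtrace (madj Y ** X)) | X. num_radius X \<le> 1}"

definition is_matrix_norm :: "('n::finite cmat \<Rightarrow> real) \<Rightarrow> bool" where
  "is_matrix_norm N \<longleftrightarrow>
     (\<forall>A. 0 \<le> N A) \<and> (\<forall>A. N A = 0 \<longleftrightarrow> A = 0) \<and>
     (\<forall>c A. N (msmult c A) = cmod c * N A) \<and>
     (\<forall>A B. N (A + B) \<le> N A + N B)"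

definition is_L_norm :: "('n::finite cmat \<Rightarrow> real) \<Rightarrow> bool" where
  "is_L_norm N \<longleftrightarrow> is_matrix_norm N \<and>
     (\<forall>(k::nat) (C::nat \<Rightarrow> 'n cmat) X.
        (\<Sum>i<k. madj (C i) ** C i) = mat 1 \<longrightarrow>
        (\<Sum>i<k. N (C i ** X ** madj (C i))) \<le> N X)"

end

theory Submission
  imports Defs
begin


definition cscale :: "complex \<Rightarrow> complex^'n \<Rightarrow> complex^'n" where
  "cscale c x = (\<chi> i. c * x $ i)"

definition outer :: "complex^'n::finite \<Rightarrow> complex^'n \<Rightarrow> 'n cmat" where
  "outer x y = (\<chi> i j. x $ i * cnj (y $ j))"

lemma cscale_nth[simp]: "cscale c x $ i = c * x $ i"
  by (simp add: cscale_def)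

lemma cinner_add_right: "cinner x (y + z) = cinner x y + cinner x z"
  by (simp add: cinner_def distrib_left sum.distrib)
lemma cinner_add_left: "cinner (x + y) z = cinner x z + cinner y z"
  by (simp add: cinner_def distrib_right sum.distrib)
lemma cinner_diff_right: "cinner x (y - z) = cinner x y - cinner x z"
  by (simp add: cinner_def right_diff_distrib sum_subtractf)
lemma cinner_diff_left: "cinner (x - y) z = cinner x z - cinner y z"
  by (simp add: cinner_def left_diff_distrib sum_subtractf)
lemma cinner_scale_right: "cinner x (cscale c y) = c * cinner x y"
  by (simp add: cinner_def sum_distrib_left algebra_simps)
lemma cinner_scale_left: "cinner (cscale c x) y = cnj c * cinner x y"
  by (simp add: cinner_def sum_distrib_left algebra_simps)
lemma vec_scaleR_nth: "(r *\<^sub>R (y::complex^'n)) $ i = of_real r * y $ i"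
  by (subst vector_scaleR_component) (rule scaleR_conv_of_real)
lemma cinner_scaleR_right: "cinner x (r *\<^sub>R y) = of_real r * cinner x y"
  unfolding cinner_def vec_scaleR_nth by (simp add: sum_distrib_left algebra_simps)
lemma cinner_scaleR_left: "cinner (r *\<^sub>R x) y = of_real r * cinner x y"
  unfolding cinner_def vec_scaleR_nth by (simp add: sum_distrib_left algebra_simps)
lemma cinner_zero_right[simp]: "cinner x 0 = 0"
  by (simp add: cinner_def)
lemma cinner_zero_left[simp]: "cinner 0 x = 0"
  by (simp add: cinner_def)
lemma cinner_sum_right: "cinner x (sum f S) = (\<Sum>i\<in>S. cinner x (f i))"
  by (induction S rule: infinite_finite_induct) (auto simp: cinner_add_right)
lemma cinner_commute: "cinner y x = cnj (cinner x y)"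
  by (simp add: cinner_def mult.commute)

lemma Re_cinner: "Re (cinner x y) = inner x y"
  by (simp add: cinner_def inner_vec_def inner_complex_def Re_sum)

lemma cinner_self: "cinner x x = of_real ((norm x)\<^sup>2)"
proof -
  have "cinner x x = (\<Sum>i\<in>UNIV. of_real ((cmod (x$i))\<^sup>2))"
    unfolding cinner_def by (rule sum.cong) (auto simp: mult.commute simp flip: complex_norm_square)
  also have "\<dots> = of_real (\<Sum>i\<in>UNIV. (cmod (x$i))\<^sup>2)" by simp
  also have "(\<Sum>i\<in>UNIV. (cmod (x$i))\<^sup>2) = (norm x)\<^sup>2"
    unfolding norm_vec_def L2_set_def by (simp add: sum_nonneg)
  finally show ?thesis .
qed

lemma cmod_sgn_mult: "cnj (sgn z) * z = of_real (cmod z)"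
proof (cases "z = 0")
  case False
  have "cnj (sgn z) * z = cnj z * z / of_real (cmod z)"
    by (simp add: sgn_div_norm divide_inverse mult.commute mult.left_commute scaleR_conv_of_real)
  also have "cnj z * z = of_real (cmod z) ^ 2" by (simp add: mult.commute flip: complex_norm_square)
  finally show ?thesis using False by (simp add: power2_eq_square)
qed simp

lemma cmod_cinner_le: "cmod (cinner x y) \<le> norm x * norm y"
proof (cases "cinner x y = 0")
  case True then show ?thesis by simp
next
  case False
  define c where "c = cnj (sgn (cinner x y))"
  have "cmod (cinner x y) = Re (c * cinner x y)"
    by (simp add: c_def cmod_sgn_mult)
  also have "\<dots> = Re (cinner x (cscale c y))" by (simp add: cinner_scale_right)
  also have "\<dots> = inner x (cscale c y)" by (rule Re_cinner)
  also have "\<dots> \<le> norm x * norm (cscale c y)" by (rule norm_cauchy_schwarz)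
  also have "norm (cscale c y) = norm y"
  proof -
    have "cmod c = 1" using False by (simp add: c_def norm_sgn)
    then show ?thesis unfolding norm_vec_def by (simp add: norm_mult)
  qed
  finally show ?thesis .
qed



lemma madj_nth[simp]: "madj A $ i $ j = cnj (A $ j $ i)"
  by (simp add: madj_def)
lemma madj_madj[simp]: "madj (madj A) = A"
  by (simp add: vec_eq_iff)
lemma madj_mult: "madj (A ** B) = madj B ** madj A"
  by (simp add: vec_eq_iff matrix_matrix_mult_def mult.commute)
lemma madj_add: "madj (A + B) = madj A + madj B"
  by (simp add: vec_eq_iff)
lemma madj_diff: "madj (A - B) = madj A - madj B"
  by (simp add: vec_eq_iff)
lemma madj_mat1[simp]: "madj (mat 1) = mat 1"
  by (simp add: vec_eq_iff mat_def)
lemma madj_zero[simp]: "madj 0 = 0"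
  by (simp add: vec_eq_iff)
lemma msmult_nth[simp]: "msmult c A $ i $ j = c * A $ i $ j"
  by (simp add: msmult_def)
lemma madj_msmult: "madj (msmult c A) = msmult (cnj c) (madj A)"
  by (simp add: vec_eq_iff)
lemma madj_sum: "madj (sum f S) = (\<Sum>i\<in>S. madj (f i))"
  by (induction S rule: infinite_finite_induct) (auto simp: madj_add)

lemma cinner_adj: "cinner x (madj A *v y) = cinner (A *v x) y"
  unfolding cinner_def matrix_vector_mult_def
  apply (simp add: sum_distrib_left sum_distrib_right)
  apply (subst sum.swap)
  apply (simp add: ac_simps)
  done
lemma cinner_adj': "cinner x (A *v y) = cinner (madj A *v x) y"
  using cinner_adj[of x "madj A" y] by simp

lemma mtrace_add: "mtrace (A + B) = mtrace A + mtrace B"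
  by (simp add: mtrace_def sum.distrib)
lemma mtrace_msmult: "mtrace (msmult c A) = c * mtrace A"
  by (simp add: mtrace_def sum_distrib_left)
lemma mtrace_comm: "mtrace (A ** B) = mtrace (B ** A)"
  unfolding mtrace_def matrix_matrix_mult_def
  apply simp
  apply (subst sum.swap)
  apply (simp add: mult.commute)
  done
lemma mtrace_madj: "mtrace (madj A) = cnj (mtrace A)"
  by (simp add: mtrace_def)
lemma mtrace_zero[simp]: "mtrace 0 = 0"
  by (simp add: mtrace_def)
lemma mtrace_sum: "mtrace (sum f S) = (\<Sum>i\<in>S. mtrace (f i))"
  by (induction S rule: infinite_finite_induct) (auto simp: mtrace_add)

lemma msmult_mv: "msmult c A *v x = cscale c (A *v x)"
  by (simp add: vec_eq_iff matrix_vector_mult_def sum_distrib_left mult.assoc)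
lemma mv_cscale: "A *v cscale c x = cscale c (A *v x)"
  by (simp add: vec_eq_iff matrix_vector_mult_def sum_distrib_left algebra_simps)
lemma msmult_mult_right: "A ** msmult c B = msmult c (A ** B)"
  by (simp add: vec_eq_iff matrix_matrix_mult_def sum_distrib_left algebra_simps)
lemma msmult_mult_left: "msmult c A ** B = msmult c (A ** B)"
  by (simp add: vec_eq_iff matrix_matrix_mult_def sum_distrib_left algebra_simps)
lemma msmult_msmult: "msmult c (msmult d A) = msmult (c * d) A"
  by (simp add: vec_eq_iff mult.assoc)
lemma msmult_one[simp]: "msmult 1 A = A"
  by (simp add: vec_eq_iff)
lemma msmult_zero[simp]: "msmult 0 A = 0"
  by (simp add: vec_eq_iff)
lemma msmult_zero_right[simp]: "msmult c 0 = 0"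
  by (simp add: vec_eq_iff)
lemma msmult_add: "msmult c (A + B) = msmult c A + msmult c B"
  by (simp add: vec_eq_iff algebra_simps)
lemma scaleR_msmult: "r *\<^sub>R (A::'n::finite cmat) = msmult (of_real r) A"
  by (simp add: vec_eq_iff) (simp add: scaleR_conv_of_real)
lemma scaleR_cscale: "r *\<^sub>R (x::complex^'n) = cscale (of_real r) x"
  by (simp add: vec_eq_iff) (simp add: scaleR_conv_of_real)

lemma sum_mv: "(sum f S) *v x = (\<Sum>i\<in>S. f i *v x)"
  by (induction S rule: infinite_finite_induct) (auto simp: matrix_vector_mult_add_rdistrib)
lemma mv_sum: "A *v (sum f S) = (\<Sum>i\<in>S. A *v f i)"
  by (induction S rule: infinite_finite_induct) (auto simp: matrix_vector_right_distrib)
lemma mult_sum: "(A::'n::finite cmat) ** (sum f S) = (\<Sum>i\<in>S. A ** f i)"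
  by (induction S rule: infinite_finite_induct) (auto simp: matrix_add_ldistrib)
lemma sum_mult: "(sum f S) ** (A::'n::finite cmat) = (\<Sum>i\<in>S. f i ** A)"
  by (induction S rule: infinite_finite_induct) (auto simp: vec_eq_iff matrix_matrix_mult_def distrib_right sum.distrib)

lemma cscale_add: "cscale c (x + y) = cscale c x + cscale c y"
  by (simp add: vec_eq_iff algebra_simps)
lemma cscale_cscale: "cscale c (cscale d x) = cscale (c * d) x"
  by (simp add: vec_eq_iff)
lemma cscale_one[simp]: "cscale 1 x = x"
  by (simp add: vec_eq_iff)
lemma cscale_zero[simp]: "cscale 0 x = 0"
  by (simp add: vec_eq_iff)
lemma cscale_zero_right[simp]: "cscale c 0 = 0"
  by (simp add: vec_eq_iff)

lemma norm_cscale: "norm (cscale c x) = cmod c * norm x"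
proof -
  have "(norm (cscale c x))\<^sup>2 = (cmod c * norm x)\<^sup>2"
  proof -
    have "of_real ((norm (cscale c x))\<^sup>2) = cinner (cscale c x) (cscale c x)"
      by (simp add: cinner_self)
    also have "\<dots> = cnj c * c * cinner x x" by (simp add: cinner_scale_left cinner_scale_right)
    also have "\<dots> = of_real ((cmod c * norm x)\<^sup>2)"
      by (simp add: cinner_self power_mult_distrib mult.commute flip: complex_norm_square)
    finally show ?thesis using of_real_eq_iff by blast
  qed
  then show ?thesis by (simp add: power2_eq_iff_nonneg)
qed

lemma outer_nth[simp]: "outer x y $ i $ j = x $ i * cnj (y $ j)"
  by (simp add: outer_def)
lemma outer_mv: "outer x y *v z = cscale (cinner y z) x"
  by (simp add: vec_eq_iff matrix_vector_mult_def cinner_def sum_distrib_left algebra_simps)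
lemma outer_mult: "outer a b ** outer c d = msmult (cinner b c) (outer a d)"
  by (simp add: vec_eq_iff matrix_matrix_mult_def cinner_def sum_distrib_left sum_distrib_right ac_simps)
lemma madj_outer: "madj (outer x y) = outer y x"
  by (simp add: vec_eq_iff)
lemma mtrace_outer: "mtrace (madj Y ** outer x x) = cinner (Y *v x) x"
  unfolding mtrace_def matrix_matrix_mult_def cinner_def matrix_vector_mult_def
  apply (simp add: sum_distrib_left sum_distrib_right)
  apply (subst sum.swap)
  apply (simp add: ac_simps)
  done

lemma inner_mat: "inner a B = Re (mtrace (madj a ** B))"
  unfolding mtrace_def matrix_matrix_mult_def inner_vec_def
  apply (simp add: inner_complex_def)
  apply (subst sum.swap)
  apply simp
  done

lemma mtrace_self: "mtrace (madj a ** a) = of_real ((norm a)\<^sup>2)"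
proof -
  have "Re (mtrace (madj a ** a)) = (norm a)\<^sup>2" by (simp flip: inner_mat add: power2_norm_eq_inner)
  moreover have "Im (mtrace (madj a ** a)) = 0"
    unfolding mtrace_def matrix_matrix_mult_def by (simp add: Im_sum)
  ultimately show ?thesis by (simp add: complex_eq_iff)
qed



lemma norm_axis_c[simp]: "norm (axis m (1::complex)) = 1"
  by (simp add: inner_axis' norm_eq_1)

lemma ex_unit: "\<exists>x::complex^'n::finite. norm x = 1"
  using norm_axis_c by blast

definition mb :: "'n::finite cmat \<Rightarrow> real" where
  "mb A = (\<Sum>i\<in>UNIV. \<Sum>j\<in>UNIV. cmod (A $ i $ j))"

lemma norm_le_sum_c: "norm (x::complex^'n::finite) \<le> (\<Sum>i\<in>UNIV. cmod (x $ i))"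
  unfolding norm_vec_def by (rule L2_set_le_sum) simp

lemma norm_mv_le: "norm (A *v x) \<le> mb A * norm x"
proof -
  have "norm (A *v x) \<le> (\<Sum>i\<in>UNIV. cmod ((A *v x) $ i))" by (rule norm_le_sum_c)
  also have "\<dots> \<le> (\<Sum>i\<in>UNIV. \<Sum>j\<in>UNIV. cmod (A $ i $ j) * norm x)"
  proof (rule sum_mono)
    fix i
    have "cmod ((A *v x) $ i) \<le> (\<Sum>j\<in>UNIV. cmod (A $ i $ j * x $ j))"
      unfolding matrix_vector_mult_def by (simp add: norm_sum)
    also have "\<dots> \<le> (\<Sum>j\<in>UNIV. cmod (A $ i $ j) * norm x)"
      by (rule sum_mono) (auto simp: norm_mult intro!: mult_left_mono Finite_Cartesian_Product.norm_nth_le)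
    finally show "cmod ((A *v x) $ i) \<le> (\<Sum>j\<in>UNIV. cmod (A $ i $ j) * norm x)" .
  qed
  also have "\<dots> = mb A * norm x" by (simp add: mb_def sum_distrib_right)
  finally show ?thesis .
qed

lemma op_set_ne: fixes A :: "'n::finite cmat" shows "{norm (A *v x) | x. norm x = 1} \<noteq> {}"
proof -
  obtain x :: "complex^'n" where "norm x = 1" using ex_unit by blast
  then show ?thesis by blast
qed
lemma op_bdd: fixes A :: "'n::finite cmat" shows "bdd_above {norm (A *v x) | x. norm x = 1}"
  by (rule bdd_aboveI[of _ "mb A"]) (auto intro: order_trans[OF norm_mv_le])

lemma op_upper: fixes A :: "'n::finite cmat" shows "norm x = 1 \<Longrightarrow> norm (A *v x) \<le> op_norm A"
  unfolding op_norm_def by (rule cSup_upper[OF _ op_bdd]) auto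

lemma op_nonneg: "0 \<le> op_norm A"
  using ex_unit op_upper norm_ge_zero order_trans by metis

lemma op_le: fixes A :: "'n::finite cmat" shows "norm (A *v x) \<le> op_norm A * norm x"
proof (cases "x = 0")
  case False
  define u where "u = cscale (of_real (1 / norm x)) x"
  have nu: "norm u = 1" using False by (simp add: u_def norm_cscale norm_divide)
  have "x = cscale (of_real (norm x)) u" using False by (simp add: u_def cscale_cscale)
  then have "A *v x = cscale (of_real (norm x)) (A *v u)" by (metis mv_cscale)
  then have "norm (A *v x) = norm x * norm (A *v u)" by (simp add: norm_cscale)
  also have "\<dots> \<le> norm x * op_norm A" using op_upper[OF nu] by (simp add: mult_left_mono)
  finally show ?thesis by (simp add: mult.commute)
qed simp

lemma op_mat1: "op_norm (mat 1 :: 'n::finite cmat) \<le> 1"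
  unfolding op_norm_def by (rule cSup_least) (use ex_unit in auto)

lemma nr_bdd: fixes A :: "'n::finite cmat" shows "bdd_above {cmod (cinner x (A *v x)) | x. norm x = 1}"
proof (rule bdd_aboveI[of _ "mb A"])
  fix y assume "y \<in> {cmod (cinner x (A *v x)) | x. norm x = 1}"
  then obtain x where y: "y = cmod (cinner x (A *v x))" and x: "norm x = 1" by auto
  have "y \<le> norm x * norm (A *v x)" using y cmod_cinner_le by simp
  also have "\<dots> \<le> mb A" using x norm_mv_le[of A x] by simp
  finally show "y \<le> mb A" .
qed

lemma nr_upper: "norm x = 1 \<Longrightarrow> cmod (cinner x (A *v x)) \<le> num_radius A"
  unfolding num_radius_def by (rule cSup_upper[OF _ nr_bdd]) auto

lemma nr_nonneg: "0 \<le> num_radius A"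
  using ex_unit nr_upper norm_ge_zero order_trans by metis

lemma nr_least: "(\<And>x. norm x = 1 \<Longrightarrow> cmod (cinner x (A *v x)) \<le> c) \<Longrightarrow> num_radius A \<le> c"
  unfolding num_radius_def by (rule cSup_least) (use ex_unit in auto)

lemma nr_le: "cmod (cinner y (A *v y)) \<le> num_radius A * (norm y)\<^sup>2"
proof (cases "y = 0")
  case False
  define u where "u = cscale (of_real (1 / norm y)) y"
  have nu: "norm u = 1" using False by (simp add: u_def norm_cscale norm_divide)
  have "y = cscale (of_real (norm y)) u" using False by (simp add: u_def cscale_cscale)
  then have "cinner y (A *v y) = of_real ((norm y)\<^sup>2) * cinner u (A *v u)"
    by (metis (no_types, lifting) cinner_scale_left cinner_scale_right complex_cnj_complex_of_real
        mult.assoc mv_cscale of_real_mult power2_eq_square)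
  then have "cmod (cinner y (A *v y)) = (norm y)\<^sup>2 * cmod (cinner u (A *v u))"
    by (simp add: norm_mult norm_power)
  also have "\<dots> \<le> (norm y)\<^sup>2 * num_radius A" using nr_upper[OF nu] by (simp add: mult_left_mono)
  finally show ?thesis by (simp add: mult.commute)
qed simp

lemma nr_msmult: "num_radius (msmult c A) \<le> cmod c * num_radius A"
proof (rule nr_least)
  fix x :: "complex^'a" assume x: "norm x = 1"
  have "cmod (cinner x (msmult c A *v x)) = cmod c * cmod (cinner x (A *v x))"
    by (simp add: msmult_mv cinner_scale_right norm_mult)
  also have "\<dots> \<le> cmod c * num_radius A" using nr_upper[OF x] by (simp add: mult_left_mono)
  finally show "cmod (cinner x (msmult c A *v x)) \<le> cmod c * num_radius A" .
qed

lemma nr_zero: "num_radius (0::'n::finite cmat) = 0"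
  by (intro antisym nr_least) (auto simp: nr_nonneg)



definition orthon :: "'n set \<Rightarrow> ('n \<Rightarrow> complex^'m) \<Rightarrow> bool" where
  "orthon J q \<longleftrightarrow> (\<forall>i\<in>J. \<forall>j\<in>J. cinner (q i) (q j) = (if i = j then 1 else 0))"

lemma cinner_i_left: "cinner (cscale \<i> v) x = - \<i> * cinner v x"
  by (simp add: cinner_scale_left)

lemma exists_orth:
  fixes S :: "(complex^'n::finite) set"
  assumes fin: "finite S" and card: "card S < CARD('n)"
  shows "\<exists>x. norm x = 1 \<and> (\<forall>v\<in>S. cinner v x = 0)"
proof -
  define T where "T = S \<union> (cscale \<i>) ` S"
  have "finite T" using fin by (simp add: T_def)
  have "card T \<le> card S + card ((cscale \<i>) ` S)" unfolding T_def by (rule card_Un_le)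
  also have "\<dots> \<le> 2 * card S" using card_image_le[OF fin, of "cscale \<i>"] by simp
  finally have "dim T < DIM(complex^'n)"
    using dim_le_card'[OF \<open>finite T\<close>] card by simp
  then obtain x :: "complex^'n" where x0: "x \<noteq> 0" and orth: "\<And>y. y \<in> span T \<Longrightarrow> orthogonal x y"
    using orthogonal_to_subspace_exists by blast
  have z: "cinner v x = 0" if v: "v \<in> S" for v
  proof -
    have "v \<in> span T" "cscale \<i> v \<in> span T" using v by (auto simp: T_def intro: span_base)
    then have "inner v x = 0" "inner (cscale \<i> v) x = 0"
      using orth by (metis orthogonal_def inner_commute)+
    then have h1: "Re (cinner v x) = 0" and h2: "Re (cinner (cscale \<i> v) x) = 0"
      by (simp_all only: Re_cinner)
    from h2 have "Im (cinner v x) = 0" by (simp add: cinner_i_left)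
    with h1 show ?thesis by (simp add: complex_eq_iff)
  qed
  define u where "u = cscale (of_real (1 / norm x)) x"
  have "norm u = 1" using x0 by (simp add: u_def norm_cscale norm_divide)
  moreover have "\<forall>v\<in>S. cinner v u = 0" using z by (simp add: u_def cinner_scale_right)
  ultimately show ?thesis by blast
qed

lemma ortho_ext:
  fixes P :: "complex^'n::finite \<Rightarrow> bool" and qz :: "'n \<Rightarrow> complex^'n"
  assumes step: "\<And>F. finite F \<Longrightarrow> card F < CARD('n) \<Longrightarrow> F \<subseteq> Collect P \<Longrightarrow>
                   \<exists>x. P x \<and> norm x = 1 \<and> (\<forall>v\<in>F. cinner v x = 0)"
    and oz: "orthon Jz qz" and Pz: "\<forall>i\<in>Jz. P (qz i)"
  shows "\<exists>q. orthon UNIV q \<and> (\<forall>i. P (q i)) \<and> (\<forall>i\<in>Jz. q i = qz i)"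
proof -
  have "\<exists>q. orthon (Jz \<union> K) q \<and> (\<forall>i\<in>Jz \<union> K. P (q i)) \<and> (\<forall>i\<in>Jz. q i = qz i)"
    if "finite K" for K
    using that
  proof (induction K rule: finite_induct)
    case empty then show ?case using oz Pz by auto
  next
    case (insert k K)
    then obtain q where q: "orthon (Jz \<union> K) q" "\<forall>i\<in>Jz \<union> K. P (q i)" "\<forall>i\<in>Jz. q i = qz i"
      by blast
    show ?case
    proof (cases "k \<in> Jz")
      case True
      then have "Jz \<union> insert k K = Jz \<union> K" by auto
      then show ?thesis using q by auto
    next
      case False
      define F where "F = q ` (Jz \<union> K)"
      have fin: "finite (Jz \<union> K)" by simp
      have "Jz \<union> K \<subset> UNIV" using False insert.hyps by auto
      then have "card (Jz \<union> K) < CARD('n)" by (simp add: psubset_card_mono)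
      then have cF: "card F < CARD('n)" unfolding F_def using card_image_le[OF fin, of q] by linarith
      have "finite F" "F \<subseteq> Collect P" using q by (auto simp: F_def)
      then obtain x where x: "P x" "norm x = 1" "\<forall>v\<in>F. cinner v x = 0" using step cF by blast
      define q' where "q' = q(k := x)"
      have kK: "k \<notin> Jz \<union> K" using False insert.hyps by auto
      have ox: "cinner (q i) x = 0" "cinner x (q i) = 0" if "i \<in> Jz \<union> K" for i
        using x(3) that by (auto simp: F_def cinner_commute[of x])
      have xx: "cinner x x = 1" using x(2) by (simp add: cinner_self)
      have "orthon (Jz \<union> insert k K) q'"
        unfolding orthon_def
      proof (intro ballI)
        fix i j assume i: "i \<in> Jz \<union> insert k K" and j: "j \<in> Jz \<union> insert k K"
        show "cinner (q' i) (q' j) = (if i = j then 1 else 0)"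
          using i j kK q(1) ox xx unfolding orthon_def q'_def by (cases "i = k"; cases "j = k") auto
      qed
      moreover have "\<forall>i\<in>Jz \<union> insert k K. P (q' i)" using q(2) x(1) by (auto simp: q'_def)
      moreover have "\<forall>i\<in>Jz. q' i = qz i" using q(3) False by (auto simp: q'_def)
      ultimately show ?thesis by blast
    qed
  qed
  from this[of UNIV] show ?thesis by simp
qed

lemma ortho_ext0:
  fixes P :: "complex^'n::finite \<Rightarrow> bool"
  assumes step: "\<And>F. finite F \<Longrightarrow> card F < CARD('n) \<Longrightarrow> F \<subseteq> Collect P \<Longrightarrow>
                   \<exists>x. P x \<and> norm x = 1 \<and> (\<forall>v\<in>F. cinner v x = 0)"
  shows "\<exists>q::'n \<Rightarrow> complex^'n. orthon UNIV q \<and> (\<forall>i. P (q i))"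
proof -
  have "orthon {} (\<lambda>_::'n. 0::complex^'n)" by (simp add: orthon_def)
  from ortho_ext[where P=P, OF step this] show ?thesis by auto
qed

lemma herm_sym: "madj H = H \<Longrightarrow> inner a (H *v b) = inner (H *v a) b"
  by (metis Re_cinner cinner_adj')

lemma mv_scaleR: "A *v (r *\<^sub>R x) = r *\<^sub>R (A *v (x::complex^'n::finite))"
  by (simp add: scaleR_cscale mv_cscale)

lemma herm_eig:
  fixes H :: "'n::finite cmat" and V :: "(complex^'n) set"
  assumes herm: "madj H = H" and sub: "subspace V" and inv: "\<forall>x\<in>V. H *v x \<in> V"
    and ne: "\<exists>x\<in>V. x \<noteq> 0"
  shows "\<exists>x\<in>V. norm x = 1 \<and> (\<exists>\<mu>::real. H *v x = \<mu> *\<^sub>R x)"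
proof -
  define K where "K = V \<inter> sphere 0 1"
  define f where "f = (\<lambda>x. inner x (H *v x))"
  have "compact K" unfolding K_def
    using closed_subspace[OF sub] by (simp add: compact_eq_bounded_closed closed_Int bounded_Int)
  moreover obtain x0 where x0: "x0 \<in> V" "x0 \<noteq> 0" using ne by blast
  then have "(1 / norm x0) *\<^sub>R x0 \<in> K" using sub by (simp add: K_def subspace_scale)
  then have "K \<noteq> {}" by blast
  moreover have "continuous_on K f" unfolding f_def
    by (intro continuous_intros linear_continuous_on) (simp add: linear_linear)
  ultimately obtain x where xK: "x \<in> K" and xmax: "\<forall>y\<in>K. f y \<le> f x"
    using continuous_attains_sup by blast
  define \<mu> where "\<mu> = f x"
  have xV: "x \<in> V" and nx: "norm x = 1" using xK by (auto simp: K_def)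
  have fscale: "f (r *\<^sub>R z) = r\<^sup>2 * f z" for r z
    by (simp add: f_def mv_scaleR power2_eq_square)
  have Q: "f z \<le> \<mu> * (norm z)\<^sup>2" if zV: "z \<in> V" for z
  proof (cases "z = 0")
    case True then show ?thesis by (simp add: f_def)
  next
    case False
    have "(1 / norm z) *\<^sub>R z \<in> K" using zV sub False by (simp add: K_def subspace_scale)
    then have "f ((1 / norm z) *\<^sub>R z) \<le> \<mu>" using xmax by (simp add: \<mu>_def)
    then have "f z / (norm z)\<^sup>2 \<le> \<mu>" by (simp add: fscale power_divide)
    then show ?thesis using False by (simp add: divide_le_eq mult.commute)
  qed
  define y where "y = H *v x - \<mu> *\<^sub>R x"
  have yV: "y \<in> V" unfolding y_def using sub inv xV by (simp add: subspace_diff subspace_scale)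
  define a where "a = (norm y)\<^sup>2"
  define b where "b = f y - \<mu> * a"
  have sym: "inner u (H *v v) = inner v (H *v u)" for u v
    using herm_sym[OF herm] by (simp add: inner_commute)
  have ineq: "2 * t * a + t\<^sup>2 * b \<le> 0" for t :: real
  proof -
    have "x + t *\<^sub>R y \<in> V" using sub xV yV by (simp add: subspace_add subspace_scale)
    then have "f (x + t *\<^sub>R y) \<le> \<mu> * (norm (x + t *\<^sub>R y))\<^sup>2" by (rule Q)
    moreover have "f (x + t *\<^sub>R y) = \<mu> + 2 * t * inner y (H *v x) + t\<^sup>2 * f y"
      unfolding f_def \<mu>_def using sym[of x y]
      by (simp add: matrix_vector_right_distrib mv_scaleR inner_add_left inner_add_right
          power2_eq_square algebra_simps)
    moreover have "(norm (x + t *\<^sub>R y))\<^sup>2 = 1 + 2 * t * inner x y + t\<^sup>2 * a"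
    proof -
      have xx: "inner x x = 1" using nx by (simp add: norm_eq_1)
      show ?thesis unfolding a_def power2_norm_eq_inner
        by (simp add: inner_add_left inner_add_right inner_commute[of y x] xx
          power2_eq_square algebra_simps)
    qed
    moreover have "inner y (H *v x) = a + \<mu> * inner x y"
    proof -
      have "H *v x = y + \<mu> *\<^sub>R x" by (simp add: y_def)
      then show ?thesis by (simp add: a_def power2_norm_eq_inner inner_add_right inner_commute)
    qed
    ultimately show ?thesis unfolding b_def by (simp add: algebra_simps)
  qed
  have "a = 0"
  proof (rule ccontr)
    assume "a \<noteq> 0"
    then have apos: "a > 0" by (simp add: a_def)
    define t where "t = a / (\<bar>b\<bar> + 1)"
    have tpos: "t > 0" using apos by (simp add: t_def)
    have "2 * t * a \<le> - (t\<^sup>2 * b)" using ineq[of t] by simp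
    also have "\<dots> \<le> t\<^sup>2 * \<bar>b\<bar>"
      by (metis abs_ge_minus_self minus_mult_right mult_left_mono zero_le_power2)
    finally have "2 * a \<le> t * \<bar>b\<bar>" using tpos by (simp add: power2_eq_square)
    also have "t * \<bar>b\<bar> < a" using apos unfolding t_def by (simp add: field_simps)
    finally show False using apos by simp
  qed
  then have "y = 0" by (simp add: a_def)
  then show ?thesis using xV nx unfolding y_def by auto
qed



lemma madd_rdistrib: "((A::'n::finite cmat) + B) ** C = A ** C + B ** C"
  by (simp add: vec_eq_iff matrix_matrix_mult_def distrib_right sum.distrib)

lemma normal_eig:
  fixes Z :: "'n::finite cmat"
  assumes nZ: "Z ** madj Z = madj Z ** Z" and sub: "subspace V"
    and iZ: "\<forall>x\<in>V. Z *v x \<in> V" and iZa: "\<forall>x\<in>V. madj Z *v x \<in> V"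
    and ne: "\<exists>x\<in>V. x \<noteq> 0" and iI: "\<forall>x\<in>V. cscale \<i> x \<in> V"
  shows "\<exists>x\<in>V. norm x = 1 \<and> (\<exists>\<alpha>. Z *v x = cscale \<alpha> x \<and> madj Z *v x = cscale (cnj \<alpha>) x)"
proof -
  define H1 where "H1 = Z + madj Z"
  have h1: "madj H1 = H1" by (simp add: H1_def madj_add add.commute)
  have iH1: "\<forall>x\<in>V. H1 *v x \<in> V"
    using iZ iZa sub by (simp add: H1_def matrix_vector_mult_add_rdistrib subspace_add)
  obtain x1 lam where x1: "x1 \<in> V" "norm x1 = 1" "H1 *v x1 = lam *\<^sub>R x1"
    using herm_eig[OF h1 sub iH1 ne] by blast
  define E where "E = {x \<in> V. H1 *v x = lam *\<^sub>R x}"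
  have subE: "subspace E"
    unfolding E_def using sub
    by (intro subspaceI) (auto simp: subspace_0 subspace_add subspace_scale
        matrix_vector_right_distrib mv_scaleR scaleR_add_right)
  have c1: "H1 ** Z = Z ** H1" unfolding H1_def
    by (simp add: madd_rdistrib matrix_add_ldistrib nZ)
  have c2: "H1 ** madj Z = madj Z ** H1" unfolding H1_def
    by (simp add: madd_rdistrib matrix_add_ldistrib nZ)
  have eZ: "Z *v x \<in> E" if "x \<in> E" for x
  proof -
    have "H1 *v (Z *v x) = Z *v (H1 *v x)" by (simp add: matrix_vector_mul_assoc c1)
    then show ?thesis using that iZ by (simp add: E_def mv_scaleR)
  qed
  have eZa: "madj Z *v x \<in> E" if "x \<in> E" for x
  proof -
    have "H1 *v (madj Z *v x) = madj Z *v (H1 *v x)" by (simp add: matrix_vector_mul_assoc c2)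
    then show ?thesis using that iZa by (simp add: E_def mv_scaleR)
  qed
  have eI: "cscale \<i> x \<in> E" if "x \<in> E" for x
    using that iI by (simp add: E_def mv_cscale scaleR_cscale cscale_cscale mult.commute)
  define H2 where "H2 = msmult \<i> (Z - madj Z)"
  have h2: "madj H2 = H2" by (simp add: H2_def vec_eq_iff algebra_simps)
  have H2v: "H2 *v x = cscale \<i> (Z *v x - madj Z *v x)" for x
    by (simp add: H2_def msmult_mv matrix_vector_mult_diff_rdistrib)
  have iH2: "\<forall>x\<in>E. H2 *v x \<in> E"
    using eZ eZa eI subE by (simp add: H2v subspace_diff)
  have neE: "\<exists>x\<in>E. x \<noteq> 0" using x1 by (auto simp: E_def)
  obtain x \<mu> where x: "x \<in> E" "norm x = 1" "H2 *v x = \<mu> *\<^sub>R x"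
    using herm_eig[OF h2 subE iH2 neE] by blast
  have e1: "H1 *v x = lam *\<^sub>R x" using x by (simp add: E_def)
  define \<alpha> where "\<alpha> = (complex_of_real lam - \<i> * complex_of_real \<mu>) / 2"
  have comp: "(Z *v x) $ k = \<alpha> * x $ k \<and> (madj Z *v x) $ k = cnj \<alpha> * x $ k" for k
  proof -
    have eq1: "(Z *v x) $ k + (madj Z *v x) $ k = of_real lam * x $ k"
      using arg_cong[OF e1, of "\<lambda>v. v $ k"] by (simp add: H1_def matrix_vector_mult_add_rdistrib) (simp add: scaleR_conv_of_real)
    have eq2: "\<i> * ((Z *v x) $ k - (madj Z *v x) $ k) = of_real \<mu> * x $ k"
      using arg_cong[OF x(3), of "\<lambda>v. v $ k"] by (simp add: H2v) (simp add: scaleR_conv_of_real)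
    have eq3: "(Z *v x) $ k - (madj Z *v x) $ k = - \<i> * of_real \<mu> * x $ k"
    proof -
      have "- \<i> * (\<i> * ((Z *v x) $ k - (madj Z *v x) $ k)) = (Z *v x) $ k - (madj Z *v x) $ k"
        by (simp add: algebra_simps)
      then show ?thesis using eq2 by (simp add: mult.assoc)
    qed
    show ?thesis using eq1 eq3 unfolding \<alpha>_def by (simp add: field_simps complex_eq_iff)
  qed
  have "x \<in> V" using x by (simp add: E_def)
  moreover have "Z *v x = cscale \<alpha> x \<and> madj Z *v x = cscale (cnj \<alpha>) x"
    using comp by (simp add: vec_eq_iff)
  ultimately show ?thesis using x(2) by blast
qed

lemma spectral_normal:
  fixes Z :: "'n::finite cmat"
  assumes nZ: "Z ** madj Z = madj Z ** Z"
  shows "\<exists>(q::'n \<Rightarrow> complex^'n) \<alpha>. orthon UNIV q \<and> (\<forall>k. Z *v q k = cscale (\<alpha> k) (q k))"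
proof -
  define P where "P = (\<lambda>v. \<exists>\<alpha>. Z *v v = cscale \<alpha> v \<and> madj Z *v v = cscale (cnj \<alpha>) v)"
  have step: "\<exists>x. P x \<and> norm x = 1 \<and> (\<forall>v\<in>F. cinner v x = 0)"
    if fin: "finite F" and cF: "card F < CARD('n)" and FP: "F \<subseteq> Collect P" for F
  proof -
    define V where "V = {x. \<forall>v\<in>F. cinner v x = 0}"
    have sub: "subspace V" unfolding V_def
      by (intro subspaceI) (auto simp: cinner_add_right cinner_scaleR_right)
    have iZ: "\<forall>x\<in>V. Z *v x \<in> V"
    proof (intro ballI)
      fix x assume xV: "x \<in> V"
      show "Z *v x \<in> V" unfolding V_def
      proof (intro CollectI ballI)
        fix v assume v: "v \<in> F"
        then obtain \<alpha> where "madj Z *v v = cscale (cnj \<alpha>) v" using FP by (auto simp: P_def)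
        then show "cinner v (Z *v x) = 0" using xV v
          by (simp add: cinner_adj' cinner_scale_left V_def)
      qed
    qed
    have iZa: "\<forall>x\<in>V. madj Z *v x \<in> V"
    proof (intro ballI)
      fix x assume xV: "x \<in> V"
      show "madj Z *v x \<in> V" unfolding V_def
      proof (intro CollectI ballI)
        fix v assume v: "v \<in> F"
        then obtain \<alpha> where "Z *v v = cscale \<alpha> v" using FP by (auto simp: P_def)
        then show "cinner v (madj Z *v x) = 0" using xV v
          by (simp add: cinner_adj cinner_scale_left V_def)
      qed
    qed
    have iI: "\<forall>x\<in>V. cscale \<i> x \<in> V" by (simp add: V_def cinner_scale_right)
    obtain x0 where "norm x0 = 1" "\<forall>v\<in>F. cinner v x0 = 0" using exists_orth[OF fin cF] by blast
    then have ne: "\<exists>x\<in>V. x \<noteq> 0" by (auto simp: V_def)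
    obtain x where "x \<in> V" "norm x = 1" "P x"
      using normal_eig[OF nZ sub iZ iZa ne iI] unfolding P_def by blast
    then show ?thesis by (auto simp: V_def)
  qed
  have "\<exists>q::'n \<Rightarrow> complex^'n. orthon UNIV q \<and> (\<forall>i. P (q i))"
    by (rule ortho_ext0) (rule step)
  then obtain q :: "'n \<Rightarrow> complex^'n" where q: "orthon UNIV q" "\<forall>i. P (q i)" by blast
  then obtain \<alpha> where "\<forall>k. Z *v q k = cscale (\<alpha> k) (q k)" unfolding P_def by metis
  then show ?thesis using q by blast
qed



lemma orthon_complete:
  fixes q :: "'n::finite \<Rightarrow> complex^'n"
  assumes o: "orthon UNIV q"
  shows "(\<Sum>k\<in>UNIV. q k $ r * cnj (q k $ s)) = (if r = s then 1 else 0)"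
proof -
  define Q :: "'n cmat" where "Q = (\<chi> r k. q k $ r)"
  have "madj Q ** Q = mat 1"
    using o unfolding orthon_def
    by (simp add: vec_eq_iff matrix_matrix_mult_def Q_def mat_def cinner_def)
  then have "Q ** madj Q = mat 1" using matrix_left_right_inverse by blast
  then have "(Q ** madj Q) $ r $ s = mat 1 $ r $ s" by simp
  then show ?thesis by (simp add: matrix_matrix_mult_def Q_def mat_def)
qed

lemma sum_delta_c: "(\<Sum>s\<in>UNIV. (f::'n::finite \<Rightarrow> complex) s * (if s = r then 1 else 0)) = f r"
proof -
  have "(\<Sum>s\<in>UNIV. f s * (if s = r then 1 else 0)) = (\<Sum>s\<in>UNIV. if s = r then f s else 0)"
    by (rule sum.cong) auto
  then show ?thesis by simp
qed

lemma cinner_one_norm: "cinner x x = 1 \<Longrightarrow> norm x = 1"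
proof -
  assume h: "cinner x x = 1"
  have "(norm x)\<^sup>2 = 1" using h cinner_self[of x] by (metis of_real_eq_1_iff)
  then show ?thesis using norm_ge_zero[of x] power2_eq_1_iff[of "norm x"] by auto
qed

lemma cinner_eq_norm: "cinner a a = cinner b b \<Longrightarrow> norm a = norm b"
  by (metis cinner_self of_real_eq_iff norm_ge_zero power2_eq_iff_nonneg)

lemma trace_basis:
  fixes q :: "'n::finite \<Rightarrow> complex^'n"
  assumes o: "orthon UNIV q"
  shows "mtrace B = (\<Sum>k\<in>UNIV. cinner (q k) (B *v q k))"
proof -
  have "(\<Sum>k\<in>UNIV. cinner (q k) (B *v q k))
      = (\<Sum>k\<in>UNIV. \<Sum>r\<in>UNIV. \<Sum>s\<in>UNIV. B $ r $ s * (q k $ s * cnj (q k $ r)))"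
    unfolding cinner_def matrix_vector_mult_def by (simp add: sum_distrib_left ac_simps)
  also have "\<dots> = (\<Sum>r\<in>UNIV. \<Sum>s\<in>UNIV. \<Sum>k\<in>UNIV. B $ r $ s * (q k $ s * cnj (q k $ r)))"
    by (subst sum.swap) (rule sum.cong[OF refl], rule sum.swap)
  also have "\<dots> = (\<Sum>r\<in>UNIV. \<Sum>s\<in>UNIV. B $ r $ s * (if s = r then 1 else 0))"
    by (simp add: orthon_complete[OF o] flip: sum_distrib_left)
  also have "\<dots> = mtrace B" by (simp only: sum_delta_c mtrace_def)
  finally show ?thesis ..
qed

lemma cinner_sum_left: "cinner (sum f S) y = (\<Sum>i\<in>S. cinner (f i) y)"
  by (induction S rule: infinite_finite_induct) (auto simp: cinner_add_left)

lemma expansion: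
  fixes w :: "'n::finite \<Rightarrow> complex^'n"
  assumes o: "orthon UNIV w"
  shows "x = (\<Sum>k\<in>UNIV. cscale (cinner (w k) x) (w k))"
proof -
  have "x $ r = (\<Sum>k\<in>UNIV. cscale (cinner (w k) x) (w k)) $ r" for r
  proof -
    have "(\<Sum>k\<in>UNIV. cscale (cinner (w k) x) (w k)) $ r
        = (\<Sum>k\<in>UNIV. \<Sum>s\<in>UNIV. x $ s * (w k $ r * cnj (w k $ s)))"
      by (simp add: cinner_def sum_distrib_left sum_distrib_right ac_simps)
    also have "\<dots> = (\<Sum>s\<in>UNIV. x $ s * (if r = s then 1 else 0))"
      by (subst sum.swap) (simp add: orthon_complete[OF o] flip: sum_distrib_left)
    also have "\<dots> = (\<Sum>s\<in>UNIV. if r = s then x $ s else 0)" by (rule sum.cong) auto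
    also have "\<dots> = x $ r" by simp
    finally show ?thesis ..
  qed
  then show ?thesis by (simp add: vec_eq_iff)
qed

lemma cinner_eq_imp: "(\<And>x. cinner x a = cinner x b) \<Longrightarrow> a = (b::complex^'n::finite)"
proof -
  assume h: "\<And>x. cinner x a = cinner x b"
  have "cinner (a - b) (a - b) = 0" using h[of "a - b"] by (simp add: cinner_diff_right)
  then show ?thesis by (simp add: cinner_self)
qed

lemma KB:
  fixes A X :: "'n::finite cmat"
  shows "cmod (mtrace (madj A ** X)) \<le> real CARD('n) * op_norm A * num_radius X"
proof -
  define Z where "Z = madj X ** X"
  have hZ: "madj Z = Z" by (simp add: Z_def madj_mult)
  then have "Z ** madj Z = madj Z ** Z" by simp
  then obtain q :: "'n \<Rightarrow> complex^'n" and lam where q: "orthon UNIV q"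
    and ev: "\<forall>k. Z *v q k = cscale (lam k) (q k)"
    using spectral_normal by blast
  define \<sigma> where "\<sigma> k = norm (X *v q k)" for k
  have orthX: "cinner (X *v q j) (X *v q k) = 0" if "j \<noteq> k" for j k
  proof -
    have "cinner (X *v q j) (X *v q k) = cinner (q j) (Z *v q k)"
      by (simp add: Z_def cinner_adj flip: matrix_vector_mul_assoc)
    also have "\<dots> = 0" using ev q that by (simp add: cinner_scale_right orthon_def)
    finally show ?thesis .
  qed
  define J where "J = {k. \<sigma> k \<noteq> 0}"
  define w0 where "w0 k = cscale (of_real (1 / \<sigma> k)) (X *v q k)" for k
  have ow0: "orthon J w0" unfolding orthon_def
  proof (intro ballI)
    fix i j assume i: "i \<in> J" and j: "j \<in> J"
    show "cinner (w0 i) (w0 j) = (if i = j then 1 else 0)"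
    proof (cases "i = j")
      case True
      have "cinner (w0 i) (w0 i) = of_real (1 / \<sigma> i) * of_real (1 / \<sigma> i) * of_real ((\<sigma> i)\<^sup>2)"
        unfolding w0_def cinner_scale_left cinner_scale_right by (simp add: cinner_self \<sigma>_def)
      also have "\<dots> = 1" using i by (simp add: J_def power2_eq_square flip: of_real_mult)
      finally show ?thesis using True by simp
    next
      case False
      then show ?thesis by (simp add: w0_def cinner_scale_left cinner_scale_right orthX)
    qed
  qed
  obtain w :: "'n \<Rightarrow> complex^'n" where ow: "orthon UNIV w" and wJ: "\<forall>k\<in>J. w k = w0 k"
    using ortho_ext[where P="\<lambda>_. True", OF _ ow0] exists_orth by fastforce
  have wX: "cinner (w k) (X *v q k) = of_real (\<sigma> k)" for k
  proof (cases "k \<in> J")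
    case True
    then have "cinner (w k) (X *v q k) = of_real (1 / \<sigma> k) * of_real ((\<sigma> k)\<^sup>2)"
      using wJ by (simp add: w0_def cinner_scale_left cinner_self \<sigma>_def)
    also have "\<dots> = of_real (\<sigma> k)" using True by (simp add: J_def power2_eq_square field_simps)
    finally show ?thesis .
  next
    case False
    then have "X *v q k = 0" by (simp add: J_def \<sigma>_def)
    then show ?thesis using False by (simp add: J_def)
  qed
  have "cmod (mtrace (madj A ** X)) = cmod (\<Sum>k\<in>UNIV. cinner (A *v q k) (X *v q k))"
    by (simp add: trace_basis[OF q] cinner_adj flip: matrix_vector_mul_assoc)
  also have "\<dots> \<le> (\<Sum>k\<in>UNIV. cmod (cinner (A *v q k) (X *v q k)))" by (rule norm_sum)
  also have "\<dots> \<le> (\<Sum>k\<in>UNIV. op_norm A * \<sigma> k)"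
  proof (rule sum_mono)
    fix k
    have nq: "norm (q k) = 1"
    proof -
      have "cinner (q k) (q k) = 1" using q by (simp add: orthon_def)
      then show ?thesis by (rule cinner_one_norm)
    qed
    have "cmod (cinner (A *v q k) (X *v q k)) \<le> norm (A *v q k) * \<sigma> k"
      by (simp add: \<sigma>_def cmod_cinner_le)
    also have "\<dots> \<le> op_norm A * \<sigma> k"
      using op_le[of A "q k"] nq by (simp add: \<sigma>_def mult_right_mono)
    finally show "cmod (cinner (A *v q k) (X *v q k)) \<le> op_norm A * \<sigma> k" .
  qed
  also have "\<dots> = op_norm A * (\<Sum>k\<in>UNIV. \<sigma> k)" by (simp add: sum_distrib_left)
  finally have s1: "cmod (mtrace (madj A ** X)) \<le> op_norm A * (\<Sum>k\<in>UNIV. \<sigma> k)" .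
  define U :: "'n cmat" where "U = (\<chi> r s. \<Sum>k\<in>UNIV. q k $ r * cnj (w k $ s))"
  have Uv: "U *v x = (\<Sum>k\<in>UNIV. cscale (cinner (w k) x) (q k))" for x
  proof -
    have "(U *v x) $ r = (\<Sum>k\<in>UNIV. cscale (cinner (w k) x) (q k)) $ r" for r
      unfolding U_def matrix_vector_mult_def cinner_def
      apply (simp add: sum_distrib_left sum_distrib_right sum_component)
      apply (subst sum.swap)
      apply (simp add: ac_simps)
      done
    then show ?thesis by (simp add: vec_eq_iff)
  qed
  have Uw: "U *v w j = q j" for j
  proof -
    have "U *v w j = (\<Sum>k\<in>UNIV. cscale (if k = j then 1 else 0) (q k))"
      using ow by (simp add: Uv orthon_def)
    also have "\<dots> = (\<Sum>k\<in>UNIV. if k = j then q k else 0)" by (rule sum.cong) auto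
    also have "\<dots> = q j" by simp
    finally show ?thesis .
  qed
  have iso: "cinner (U *v x) (U *v y) = cinner x y" for x y
  proof -
    have "cinner (U *v x) (U *v y)
        = (\<Sum>k\<in>UNIV. \<Sum>j\<in>UNIV. (cinner (w k) y * cnj (cinner (w j) x)) * cinner (q j) (q k))"
      by (simp add: Uv cinner_sum_left cinner_sum_right cinner_scale_left cinner_scale_right
          sum_distrib_left ac_simps)
    also have "\<dots> = (\<Sum>k\<in>UNIV. cinner (w k) y * cnj (cinner (w k) x))"
    proof (rule sum.cong[OF refl])
      fix k
      have "cinner (q j) (q k) = (if j = k then 1 else 0)" for j using q by (simp add: orthon_def)
      then show "(\<Sum>j\<in>UNIV. (cinner (w k) y * cnj (cinner (w j) x)) * cinner (q j) (q k))
          = cinner (w k) y * cnj (cinner (w k) x)"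
        by (simp only: sum_delta_c)
    qed
    also have "\<dots> = cinner x y"
      apply (subst (2) expansion[OF ow, of y])
      apply (simp add: cinner_sum_right cinner_scale_right cinner_commute[of x])
      done
    finally show ?thesis .
  qed
  have "madj U ** U = mat 1"
  proof -
    have "(madj U ** U) *v y = mat 1 *v y" for y
      by (rule cinner_eq_imp) (simp add: cinner_adj iso flip: matrix_vector_mul_assoc)
    then show ?thesis by (simp add: matrix_eq)
  qed
  moreover then have "U ** madj U = mat 1" using matrix_left_right_inverse by blast
  ultimately have "U ** madj U = madj U ** U" by simp
  then obtain r :: "'n \<Rightarrow> complex^'n" and \<delta> where r: "orthon UNIV r"
    and evU: "\<forall>k. U *v r k = cscale (\<delta> k) (r k)"
    using spectral_normal by blast
  have nr: "norm (r k) = 1" for k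
  proof -
    have "cinner (r k) (r k) = 1" using r by (simp add: orthon_def)
    then show ?thesis by (rule cinner_one_norm)
  qed
  have d1: "cmod (\<delta> k) = 1" for k
  proof -
    have "norm (U *v r k) = norm (r k)"
      using iso[of "r k" "r k"] by (rule cinner_eq_norm)
    then show ?thesis using evU nr by (simp add: norm_cscale)
  qed
  have "(\<Sum>k\<in>UNIV. \<sigma> k) = Re (\<Sum>k\<in>UNIV. cinner (w k) (X *v q k))"
    by (simp add: wX Re_sum)
  also have "(\<Sum>k\<in>UNIV. cinner (w k) (X *v q k)) = mtrace (X ** U)"
    by (simp add: trace_basis[OF ow] Uw flip: matrix_vector_mul_assoc)
  also have "mtrace (X ** U) = (\<Sum>k\<in>UNIV. \<delta> k * cinner (r k) (X *v r k))"
    by (simp add: trace_basis[OF r] evU mv_cscale cinner_scale_right flip: matrix_vector_mul_assoc)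
  also have "Re \<dots> \<le> cmod \<dots>" by (rule complex_Re_le_cmod)
  also have "\<dots> \<le> (\<Sum>k\<in>UNIV. cmod (\<delta> k * cinner (r k) (X *v r k)))" by (rule norm_sum)
  also have "\<dots> \<le> (\<Sum>k\<in>(UNIV::'n set). num_radius X)"
    by (rule sum_mono) (simp add: norm_mult d1 nr_upper nr)
  also have "\<dots> = real CARD('n) * num_radius X" by simp
  finally have s2: "(\<Sum>k\<in>UNIV. \<sigma> k) \<le> real CARD('n) * num_radius X" .
  have "cmod (mtrace (madj A ** X)) \<le> op_norm A * (real CARD('n) * num_radius X)"
    using s1 s2 op_nonneg[of A] by (meson mult_left_mono order_trans)
  then show ?thesis by (simp add: ac_simps)
qed



lemma dnr_ne: fixes Y :: "'n::finite cmat"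
  shows "{cmod (mtrace (madj Y ** X)) | X. num_radius X \<le> 1} \<noteq> {}"
proof -
  have "num_radius (0::'n cmat) \<le> 1" by (simp add: nr_zero)
  then show ?thesis by blast
qed

lemma dnr_bdd: fixes Y :: "'n::finite cmat"
  shows "bdd_above {cmod (mtrace (madj Y ** X)) | X. num_radius X \<le> 1}"
proof (rule bdd_aboveI[of _ "real CARD('n) * op_norm Y"])
  fix z assume "z \<in> {cmod (mtrace (madj Y ** X)) | X. num_radius X \<le> 1}"
  then obtain X where z: "z = cmod (mtrace (madj Y ** X))" and X: "num_radius X \<le> 1" by auto
  have "z \<le> real CARD('n) * op_norm Y * num_radius X" using z KB by simp
  also have "\<dots> \<le> real CARD('n) * op_norm Y * 1"
    using X op_nonneg[of Y] by (intro mult_left_mono) auto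
  finally show "z \<le> real CARD('n) * op_norm Y" by simp
qed

lemma dnr_upper: "num_radius X \<le> 1 \<Longrightarrow> cmod (mtrace (madj Y ** X)) \<le> dual_num_radius Y"
  unfolding dual_num_radius_def by (rule cSup_upper[OF _ dnr_bdd]) auto

lemma dnr_least: "(\<And>X. num_radius X \<le> 1 \<Longrightarrow> cmod (mtrace (madj Y ** X)) \<le> c) \<Longrightarrow> dual_num_radius Y \<le> c"
  unfolding dual_num_radius_def by (rule cSup_least[OF dnr_ne]) auto

lemma dnr_nonneg: "0 \<le> dual_num_radius (Y::'n::finite cmat)"
  using dnr_upper[of "0::'n cmat" Y] by (simp add: nr_zero)

lemma dnr_le_op: fixes Y :: "'n::finite cmat"
  shows "dual_num_radius Y \<le> real CARD('n) * op_norm Y"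
proof (rule dnr_least)
  fix X :: "'n cmat" assume X: "num_radius X \<le> 1"
  have "cmod (mtrace (madj Y ** X)) \<le> real CARD('n) * op_norm Y * num_radius X" by (rule KB)
  also have "\<dots> \<le> real CARD('n) * op_norm Y * 1"
    using X op_nonneg[of Y] by (intro mult_left_mono) auto
  finally show "cmod (mtrace (madj Y ** X)) \<le> real CARD('n) * op_norm Y" by simp
qed

lemma zero_mmult[simp]: "(0::'n::finite cmat) ** X = 0"
  by (simp add: vec_eq_iff matrix_matrix_mult_def)

lemma dnr_zero: "dual_num_radius (0::'n::finite cmat) = 0"
  by (intro antisym dnr_least) (auto simp: dnr_nonneg)

lemma tr_msmult_left: "mtrace (madj (msmult c Y) ** X) = cnj c * mtrace (madj Y ** X)"
  by (simp add: madj_msmult msmult_mult_left mtrace_msmult)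

lemma dnr_scale: fixes Y :: "'n::finite cmat"
  shows "dual_num_radius (msmult c Y) = cmod c * dual_num_radius Y"
proof -
  have le: "dual_num_radius (msmult d Z) \<le> cmod d * dual_num_radius Z" for d and Z :: "'n cmat"
  proof (rule dnr_least)
    fix X :: "'n cmat" assume X: "num_radius X \<le> 1"
    have "cmod (mtrace (madj (msmult d Z) ** X)) = cmod d * cmod (mtrace (madj Z ** X))"
      by (simp add: tr_msmult_left norm_mult)
    also have "\<dots> \<le> cmod d * dual_num_radius Z" using dnr_upper[OF X] by (simp add: mult_left_mono)
    finally show "cmod (mtrace (madj (msmult d Z) ** X)) \<le> cmod d * dual_num_radius Z" .
  qed
  show ?thesis
  proof (cases "c = 0")
    case True then show ?thesis by (simp add: dnr_zero)
  next
    case False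
    have "dual_num_radius Y = dual_num_radius (msmult (1/c) (msmult c Y))"
      using False by (simp add: msmult_msmult)
    also have "\<dots> \<le> cmod (1/c) * dual_num_radius (msmult c Y)" by (rule le)
    finally have "cmod c * dual_num_radius Y \<le> dual_num_radius (msmult c Y)"
      using False by (simp add: norm_divide field_simps)
    with le[of c Y] show ?thesis by simp
  qed
qed

lemma dnr_triangle: "dual_num_radius (A + B) \<le> dual_num_radius A + dual_num_radius (B::'n::finite cmat)"
proof (rule dnr_least)
  fix X :: "'n cmat" assume X: "num_radius X \<le> 1"
  have "cmod (mtrace (madj (A + B) ** X)) = cmod (mtrace (madj A ** X) + mtrace (madj B ** X))"
    by (simp add: madj_add madd_rdistrib mtrace_add)
  also have "\<dots> \<le> cmod (mtrace (madj A ** X)) + cmod (mtrace (madj B ** X))" by (rule norm_triangle_ineq)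
  also have "\<dots> \<le> dual_num_radius A + dual_num_radius B" using dnr_upper[OF X] by (intro add_mono)
  finally show "cmod (mtrace (madj (A + B) ** X)) \<le> dual_num_radius A + dual_num_radius B" .
qed

lemma dnr_pos: fixes Y :: "'n::finite cmat"
  assumes "dual_num_radius Y = 0" shows "Y = 0"
proof -
  define c where "c = max 1 (num_radius Y)"
  have cpos: "c > 0" by (simp add: c_def)
  define X where "X = msmult (of_real (1 / c)) Y"
  have "num_radius X \<le> cmod (of_real (1/c)) * num_radius Y" unfolding X_def by (rule nr_msmult)
  also have "\<dots> = num_radius Y / c" using cpos by (simp add: norm_divide)
  also have "\<dots> \<le> 1" using cpos by (simp add: c_def divide_le_eq)
  finally have "cmod (mtrace (madj Y ** X)) \<le> 0" using dnr_upper[of X Y] assms by simp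
  then have "mtrace (madj Y ** X) = 0" by simp
  then have "of_real (1/c) * of_real ((norm Y)\<^sup>2) = (0::complex)"
    by (simp add: X_def msmult_mult_right mtrace_msmult mtrace_self)
  then show ?thesis using cpos by simp
qed

lemma cmod_cnj_sgn_le: "cmod (cnj (sgn z)) \<le> 1"
  by (cases "z = 0") (simp_all add: norm_sgn)

lemma dnr_L:
  fixes C :: "nat \<Rightarrow> 'n::finite cmat" and X :: "'n cmat"
  assumes sumC: "(\<Sum>i<k. madj (C i) ** C i) = mat 1"
  shows "(\<Sum>i<k. dual_num_radius (C i ** X ** madj (C i))) \<le> dual_num_radius X"
proof -
  have A: "(\<Sum>i<k. cmod (mtrace (madj (C i ** X ** madj (C i)) ** Y i))) \<le> dual_num_radius X"
    if Y: "\<forall>i. num_radius (Y i) \<le> 1" for Y :: "nat \<Rightarrow> 'n cmat"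
  proof -
    define t where "t i = mtrace (madj X ** (madj (C i) ** Y i ** C i))" for i
    have teq: "mtrace (madj (C i ** X ** madj (C i)) ** Y i) = t i" for i
    proof -
      have "madj (C i ** X ** madj (C i)) ** Y i = C i ** (madj X ** madj (C i) ** Y i)"
        by (simp add: madj_mult matrix_mul_assoc)
      then have "mtrace (madj (C i ** X ** madj (C i)) ** Y i) = mtrace (C i ** (madj X ** madj (C i) ** Y i))"
        by simp
      also have "\<dots> = mtrace ((madj X ** madj (C i) ** Y i) ** C i)" by (rule mtrace_comm)
      finally show ?thesis by (simp add: t_def matrix_mul_assoc)
    qed
    define \<phi> where "\<phi> i = cnj (sgn (t i))" for i
    define Zm where "Zm = (\<Sum>i<k. msmult (\<phi> i) (madj (C i) ** Y i ** C i))"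
    have tr: "mtrace (madj X ** Zm) = (\<Sum>i<k. \<phi> i * t i)"
      by (simp add: Zm_def mult_sum mtrace_sum msmult_mult_right mtrace_msmult t_def)
    have "(\<Sum>i<k. \<phi> i * t i) = of_real (\<Sum>i<k. cmod (t i))"
      by (simp add: \<phi>_def cmod_sgn_mult)
    then have H: "mtrace (madj X ** Zm) = of_real (\<Sum>i<k. cmod (t i))" using tr by simp
    have eq: "(\<Sum>i<k. cmod (t i)) = cmod (mtrace (madj X ** Zm))"
      unfolding H norm_of_real by (rule abs_of_nonneg[symmetric], rule sum_nonneg, simp)
    have nrZ: "num_radius Zm \<le> 1"
    proof (rule nr_least)
      fix x :: "complex^'n" assume x: "norm x = 1"
      have "cinner x (Zm *v x) = (\<Sum>i<k. \<phi> i * cinner (C i *v x) (Y i *v (C i *v x)))"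
        by (simp add: Zm_def sum_mv cinner_sum_right msmult_mv cinner_scale_right cinner_adj
            flip: matrix_vector_mul_assoc)
      then have "cmod (cinner x (Zm *v x)) \<le> (\<Sum>i<k. cmod (\<phi> i * cinner (C i *v x) (Y i *v (C i *v x))))"
        by (simp add: norm_sum)
      also have "\<dots> \<le> (\<Sum>i<k. (norm (C i *v x))\<^sup>2)"
      proof (rule sum_mono)
        fix i
        have "cmod (\<phi> i * cinner (C i *v x) (Y i *v (C i *v x))) \<le> 1 * (num_radius (Y i) * (norm (C i *v x))\<^sup>2)"
          unfolding norm_mult using cmod_cnj_sgn_le nr_le
          by (intro mult_mono) (auto simp: \<phi>_def)
        also have "\<dots> \<le> (norm (C i *v x))\<^sup>2"
          using Y mult_right_mono[of "num_radius (Y i)" 1 "(norm (C i *v x))\<^sup>2"] by simp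
        finally show "cmod (\<phi> i * cinner (C i *v x) (Y i *v (C i *v x))) \<le> (norm (C i *v x))\<^sup>2" .
      qed
      also have "\<dots> = 1"
      proof -
        have "of_real (\<Sum>i<k. (norm (C i *v x))\<^sup>2) = (\<Sum>i<k. cinner (C i *v x) (C i *v x))"
          by (simp add: cinner_self)
        also have "\<dots> = cinner x ((\<Sum>i<k. madj (C i) ** C i) *v x)"
          by (simp add: sum_mv cinner_sum_right cinner_adj flip: matrix_vector_mul_assoc)
        also have "\<dots> = 1" using x by (simp add: sumC cinner_self)
        finally show ?thesis by (metis of_real_eq_1_iff)
      qed
      finally show "cmod (cinner x (Zm *v x)) \<le> 1" .
    qed
    show ?thesis using eq dnr_upper[OF nrZ, of X] by (simp add: teq)
  qed
  show ?thesis
  proof (rule ccontr)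
    assume "\<not> ?thesis"
    then have gt: "dual_num_radius X < (\<Sum>i<k. dual_num_radius (C i ** X ** madj (C i)))" by simp
    then have k0: "k > 0" using dnr_nonneg[of X] by (cases k) auto
    define D where "D = (\<Sum>i<k. dual_num_radius (C i ** X ** madj (C i))) - dual_num_radius X"
    define e where "e = D / real k"
    have epos: "e > 0" using gt k0 by (simp add: e_def D_def)
    have "\<exists>Yi. num_radius Yi \<le> 1 \<and> dual_num_radius (C i ** X ** madj (C i)) - e
              < cmod (mtrace (madj (C i ** X ** madj (C i)) ** Yi))" for i
    proof -
      have "dual_num_radius (C i ** X ** madj (C i)) - e < dual_num_radius (C i ** X ** madj (C i))"
        using epos by simp
      then show ?thesis
        unfolding dual_num_radius_def less_cSup_iff[OF dnr_ne dnr_bdd]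
        by (auto simp: dual_num_radius_def)
    qed
    then obtain Y where Y: "\<forall>i. num_radius (Y i) \<le> 1 \<and> dual_num_radius (C i ** X ** madj (C i)) - e
              < cmod (mtrace (madj (C i ** X ** madj (C i)) ** Y i))"
      by metis
    have "(\<Sum>i<k. dual_num_radius (C i ** X ** madj (C i)) - e)
        < (\<Sum>i<k. cmod (mtrace (madj (C i ** X ** madj (C i)) ** Y i)))"
      using k0 Y by (intro sum_strict_mono) auto
    also have "\<dots> \<le> dual_num_radius X" using A Y by blast
    finally show False using k0 by (simp add: sum_subtractf e_def D_def)
  qed
qed



lemma sum_outer_axis: "(\<Sum>j\<in>UNIV. outer (axis j (1::complex)) (axis j 1)) = (mat 1 :: 'n::finite cmat)"
proof -
  have "(\<Sum>j\<in>UNIV. outer (axis j (1::complex)) (axis j 1)) $ r $ s = (mat 1 :: 'n cmat) $ r $ s" for r s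
  proof -
    have "(\<Sum>j\<in>UNIV. outer (axis j (1::complex)) (axis j 1)) $ r $ s
        = (\<Sum>j\<in>UNIV. axis j (1::complex) $ r * cnj (axis j 1 $ s))"
      by (simp add: sum_component)
    also have "\<dots> = (\<Sum>j\<in>UNIV. (if j = r then (if j = s then 1 else 0) else 0))"
      by (rule sum.cong) (auto simp: axis_def)
    also have "\<dots> = (mat 1 :: 'n cmat) $ r $ s" by (simp add: mat_def)
    finally show ?thesis .
  qed
  then show ?thesis by (simp add: vec_eq_iff)
qed

lemma max_part:
  fixes M :: "'n::finite cmat \<Rightarrow> real"
  assumes LM: "is_L_norm M" and dom: "\<forall>A. M A \<le> op_norm A"
  shows "M A \<le> dual_num_radius A / real CARD('n)"
proof -
  have nn: "\<And>A. 0 \<le> M A" and z: "\<And>A. M A = 0 \<longleftrightarrow> A = 0"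
    and hom: "\<And>c A. M (msmult c A) = cmod c * M A" and tri: "\<And>A B. M (A + B) \<le> M A + M B"
    using LM unfolding is_L_norm_def is_matrix_norm_def by auto
  have Lall: "\<forall>(k::nat) (C::nat \<Rightarrow> 'n cmat) X. (\<Sum>i<k. madj (C i) ** C i) = mat 1 \<longrightarrow>
        (\<Sum>i<k. M (C i ** X ** madj (C i))) \<le> M X"
    using LM unfolding is_L_norm_def by blast
  then have L: "\<And>(k::nat) (C::nat \<Rightarrow> 'n cmat) X. (\<Sum>i<k. madj (C i) ** C i) = mat 1 \<Longrightarrow> (\<Sum>i<k. M (C i ** X ** madj (C i))) \<le> M X"
    by blast
  define n where "n = CARD('n)"
  have npos: "real n > 0" by (simp add: n_def)
  have M0: "M 0 = 0" using z by simp
  have homR: "M (r *\<^sub>R B) = \<bar>r\<bar> * M B" for r B by (simp add: scaleR_msmult hom)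
  have rank1: "M (outer x x) \<le> 1 / real n" if x: "norm x = 1" for x :: "complex^'n"
  proof -
    obtain f where f: "bij_betw f {0..<card (UNIV::'n set)} (UNIV::'n set)"
      using ex_bij_betw_nat_finite[of "UNIV::'n set"] by auto
    then have bf: "bij_betw f {..<n} UNIV" by (simp add: n_def atLeast0LessThan)
    define e where "e j = axis j (1::complex)" for j :: 'n
    have ee: "cinner (e j) (e j) = 1" for j by (simp add: e_def cinner_self)
    have xx: "cinner x x = 1" using x by (simp add: cinner_self)
    define C where "C i = outer x (e (f i))" for i
    have "(\<Sum>i<n. madj (C i) ** C i) = (\<Sum>i<n. outer (e (f i)) (e (f i)))"
      by (simp add: C_def madj_outer outer_mult xx)
    also have "\<dots> = (\<Sum>j\<in>UNIV. outer (e j) (e j))"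
      by (rule sum.reindex_bij_betw[OF bf])
    also have "\<dots> = mat 1" by (simp add: e_def sum_outer_axis)
    finally have sC: "(\<Sum>i<n. madj (C i) ** C i) = mat 1" .
    have "C i ** mat 1 ** madj (C i) = outer x x" for i
      by (simp add: C_def madj_outer outer_mult ee)
    then have "real n * M (outer x x) \<le> M (mat 1)" using L[OF sC, of "mat 1"] by simp
    also have "\<dots> \<le> 1" using dom op_mat1 order_trans by blast
    finally show ?thesis using npos by (simp add: field_simps)
  qed
  show ?thesis
  proof (cases "A = 0")
    case True
    then show ?thesis using M0 dnr_nonneg[of A] by simp
  next
    case False
    then have MApos: "M A > 0" using nn[of A] z[of A] by simp
    define S where "S = {B. M B < M A}"
    have cS: "convex S"
    proof (rule convexI)
      fix x y and u v :: real assume xs: "x \<in> S" and ys: "y \<in> S" and u: "0 \<le> u" and v: "0 \<le> v" and uv: "u + v = 1"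
      have "M (u *\<^sub>R x + v *\<^sub>R y) \<le> u * M x + v * M y"
        using tri[of "u *\<^sub>R x" "v *\<^sub>R y"] u v by (simp add: homR)
      also have "\<dots> < M A"
      proof (cases "u = 0")
        case True then show ?thesis using uv ys by (simp add: S_def)
      next
        case False
        then have "u * M x < u * M A" using u xs by (simp add: S_def)
        moreover have "v * M y \<le> v * M A" using v ys by (simp add: S_def mult_left_mono)
        moreover have "u * M A + v * M A = M A" using uv by (metis distrib_right mult_1)
        ultimately show ?thesis by linarith
      qed
      finally show "u *\<^sub>R x + v *\<^sub>R y \<in> S" by (simp add: S_def)
    qed
    have "0 \<in> S" using MApos M0 by (simp add: S_def)
    then have "S \<noteq> {}" by blast
    moreover have "S \<inter> {A} = {}" by (simp add: S_def)
    ultimately obtain a b where a0: "a \<noteq> 0" and aS: "\<forall>x\<in>S. inner a x \<le> b" and aA: "inner a A \<ge> b"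
      using separating_hyperplane_sets[OF cS convex_singleton] by blast
    have b0: "b \<ge> 0" using aS \<open>0 \<in> S\<close> by fastforce
    define c0 where "c0 = b / M A"
    have c0nn: "c0 \<ge> 0" using b0 MApos by (simp add: c0_def)
    have claim1: "inner a B \<le> c0 * M B" for B
    proof (cases "B = 0")
      case True then show ?thesis using M0 by simp
    next
      case False
      then have MBpos: "M B > 0" using nn[of B] z[of B] by simp
      define y where "y = M A / M B * inner a B"
      have sy: "s * y \<le> b" if s: "0 < s" "s < 1" for s
      proof -
        define r where "r = s * M A / M B"
        have rpos: "r > 0" using s MApos MBpos by (simp add: r_def)
        have "M (r *\<^sub>R B) = s * M A" using rpos MBpos s MApos by (simp add: homR r_def)
        then have "r *\<^sub>R B \<in> S" using s MApos by (simp add: S_def)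
        then have "inner a (r *\<^sub>R B) \<le> b" using aS by blast
        then show ?thesis by (simp add: r_def y_def)
      qed
      have "y \<le> b"
      proof (rule ccontr)
        assume "\<not> y \<le> b"
        then have yb: "y > b" by simp
        then have ypos: "y > 0" using b0 by simp
        define s where "s = (b / y + 1) / 2"
        have "b / y < 1" using yb ypos by (simp add: divide_less_eq)
        moreover have "b / y \<ge> 0" using b0 ypos by simp
        ultimately have "0 < s" "s < 1" by (auto simp: s_def)
        then have "s * y \<le> b" by (rule sy)
        moreover have "s * y = (b + y) / 2" using ypos by (simp add: s_def field_simps)
        ultimately show False using yb by simp
      qed
      then show ?thesis using MApos MBpos by (simp add: y_def c0_def field_simps)
    qed
    have claim2: "cmod (mtrace (madj a ** B)) \<le> c0 * M B" for B
    proof -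
      define t where "t = mtrace (madj a ** B)"
      define \<phi> where "\<phi> = cnj (sgn t)"
      have "inner a (msmult \<phi> B) = Re (\<phi> * t)"
        by (simp add: inner_mat msmult_mult_right mtrace_msmult t_def)
      also have "\<dots> = cmod t" by (simp add: \<phi>_def cmod_sgn_mult)
      finally have "cmod t \<le> c0 * M (msmult \<phi> B)" using claim1[of "msmult \<phi> B"] by simp
      also have "\<dots> = c0 * (cmod \<phi> * M B)" by (simp add: hom)
      also have "\<dots> \<le> c0 * (1 * M B)"
        using c0nn nn[of B] cmod_cnj_sgn_le[of t] by (intro mult_left_mono mult_right_mono) (auto simp: \<phi>_def)
      finally show ?thesis by (simp add: t_def)
    qed
    have c0pos: "c0 > 0"
    proof (rule ccontr)
      assume "\<not> c0 > 0"
      then have "c0 = 0" using c0nn by simp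
      then have "cmod (mtrace (madj a ** a)) \<le> 0" using claim2[of a] by simp
      then have "(norm a)\<^sup>2 = 0" by (simp add: mtrace_self)
      then show False using a0 by simp
    qed
    have nra: "num_radius a \<le> c0 / real n"
    proof (rule nr_least)
      fix x :: "complex^'n" assume x: "norm x = 1"
      have "cmod (cinner x (a *v x)) = cmod (mtrace (madj a ** outer x x))"
        by (simp add: mtrace_outer cinner_commute[of "a *v x"])
      also have "\<dots> \<le> c0 * M (outer x x)" by (rule claim2)
      also have "\<dots> \<le> c0 * (1 / real n)" using rank1[OF x] c0nn by (rule mult_left_mono)
      finally show "cmod (cinner x (a *v x)) \<le> c0 / real n" by simp
    qed
    define X where "X = msmult (of_real (real n / c0)) a"
    have "num_radius X \<le> cmod (of_real (real n / c0)) * num_radius a"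
      unfolding X_def by (rule nr_msmult)
    also have "\<dots> = (real n / c0) * num_radius a"
      by (subst norm_of_real) (use c0pos in simp)
    also have "\<dots> \<le> (real n / c0) * (c0 / real n)"
      using nra c0pos npos by (intro mult_left_mono) auto
    also have "\<dots> = 1" using c0pos npos by simp
    finally have nX: "num_radius X \<le> 1" .
    have trA: "mtrace (madj A ** a) = cnj (mtrace (madj a ** A))"
      by (metis madj_madj madj_mult mtrace_madj)
    have "real n * M A = real n / c0 * (c0 * M A)" using c0pos by simp
    also have "\<dots> \<le> real n / c0 * inner a A"
    proof -
      have "c0 * M A = b" using MApos by (simp add: c0_def)
      then show ?thesis using aA c0pos npos by (intro mult_left_mono) auto
    qed
    also have "\<dots> = real n / c0 * Re (mtrace (madj a ** A))" by (simp add: inner_mat)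
    also have "\<dots> \<le> real n / c0 * cmod (mtrace (madj a ** A))"
      using c0pos npos by (intro mult_left_mono complex_Re_le_cmod) auto
    also have "\<dots> = cmod (mtrace (madj A ** X))"
    proof -
      have "mtrace (madj A ** X) = of_real (real n / c0) * cnj (mtrace (madj a ** A))"
        by (simp add: X_def msmult_mult_right mtrace_msmult trA)
      then have "cmod (mtrace (madj A ** X)) = \<bar>real n / c0\<bar> * cmod (mtrace (madj a ** A))"
        by (simp only: norm_mult norm_of_real complex_mod_cnj)
      then show ?thesis using c0pos by simp
    qed
    also have "\<dots> \<le> dual_num_radius A" by (rule dnr_upper[OF nX])
    finally show ?thesis using npos by (simp add: n_def field_simps)
  qed
qed

theorem corollary3p8:
  fixes N :: "'n::finite cmat \<Rightarrow> real"
  defines "N \<equiv> (\<lambda>A. dual_num_radius A / real CARD('n))"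
  shows "is_L_norm N \<and> (\<forall>A. N A \<le> op_norm A) \<and>
         (\<forall>M :: 'n cmat \<Rightarrow> real. is_L_norm M \<and> (\<forall>A. M A \<le> op_norm A) \<longrightarrow> (\<forall>A. M A \<le> N A))"
proof -
  have npos: "real CARD('n) > 0" by simp
  have mn: "is_matrix_norm N"
    unfolding is_matrix_norm_def N_def
  proof (intro conjI allI)
    fix A :: "'n cmat"
    show "0 \<le> dual_num_radius A / real CARD('n)" by (simp add: dnr_nonneg)
    show "(dual_num_radius A / real CARD('n) = 0) = (A = 0)"
      using dnr_pos[of A] dnr_zero by auto
  next
    fix c and A :: "'n cmat"
    show "dual_num_radius (msmult c A) / real CARD('n) = cmod c * (dual_num_radius A / real CARD('n))"
      by (simp add: dnr_scale)
  next
    fix A B :: "'n cmat"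
    show "dual_num_radius (A + B) / real CARD('n) \<le> dual_num_radius A / real CARD('n) + dual_num_radius B / real CARD('n)"
      using dnr_triangle[of A B] npos by (simp add: divide_right_mono flip: add_divide_distrib)
  qed
  have Lp: "is_L_norm N"
    unfolding is_L_norm_def
  proof (intro conjI mn allI impI)
    fix k and C :: "nat \<Rightarrow> 'n cmat" and X
    assume sC: "(\<Sum>i<k. madj (C i) ** C i) = mat 1"
    have "(\<Sum>i<k. N (C i ** X ** madj (C i))) = (\<Sum>i<k. dual_num_radius (C i ** X ** madj (C i))) / real CARD('n)"
      by (simp add: N_def sum_divide_distrib)
    also have "\<dots> \<le> dual_num_radius X / real CARD('n)"
      using dnr_L[OF sC, of X] npos by (simp add: divide_right_mono)
    finally show "(\<Sum>i<k. N (C i ** X ** madj (C i))) \<le> N X" by (simp add: N_def)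
  qed
  have dom: "\<forall>A. N A \<le> op_norm A"
  proof
    fix A :: "'n cmat"
    have "dual_num_radius A \<le> real CARD('n) * op_norm A" by (rule dnr_le_op)
    then show "N A \<le> op_norm A" using npos by (simp add: N_def divide_le_eq mult.commute)
  qed
  have mx: "\<forall>M :: 'n cmat \<Rightarrow> real. is_L_norm M \<and> (\<forall>A. M A \<le> op_norm A) \<longrightarrow> (\<forall>A. M A \<le> N A)"
  proof (intro allI impI)
    fix M :: "'n cmat \<Rightarrow> real" and A :: "'n cmat"
    assume h: "is_L_norm M \<and> (\<forall>A. M A \<le> op_norm A)"
    then show "M A \<le> N A" unfolding N_def using max_part[of M A] by blast
  qed
  show ?thesis using Lp dom mx by blast
qed


end
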